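(* Let $M\in\mathbb R^{n\times n}$ be sufficient, $B$ a complementary basis, $i\in B$, and suppose $B'=(B\setminus\{i\})\cup\{\bar i\}$ is a basis (i.e. $A_{\cdot B'}$ is invertible). Then $\mathcal C(B\setminus\{i\})$ is a facet (face of dimension $n-1$) of both $\mathcal C(B)$ and $\mathcal C(B')$, $\mathcal C(B)\cap\mathcal C(B')=\mathcal C(B\setminus\{i\})$, and for every complementary basis $B''\notin\{B,B'\}$ the cone $\mathcal C(B'')$ does not intersect the relative interior of $\mathcal C(B\setminus\{i\})$.
   Context: Let $M\in\mathbb R^{n\times n}$ and $A=[\,I\;\;-M\,]\in\mathbb R^{n\times 2n}$, with columns indexed by $\{1,\dots,2n\}$; for $J\subseteq\{1,\dots,2n\}$, $A_{\cdot J}$ denotes the submatrix of columns indexed by $J$. For $i\in\{1,\dots,2n\}$ the complementary index is $\bar i=i+n$ if $i\le n$ and $\bar i=i-n$ if $i>n$. A set $J$ is complementary if $i\in J$ implies $\bar i\notin J$. A complementary basis is a complementary set $B$ with $|B|=n$ and $A_{\cdot B}$ invertible. For a complementary set $J$, the complementary cone is $\mathcal C(J)=\{A_{\cdot J}\lambda:\lambda\ge 0\}$. $M$ is column sufficient if $[z_i(Mz)_i\le 0\ \forall i]\Rightarrow[z_i(Mz)_i=0\ \forall i]$; row sufficient if $M^T$ is column sufficient; sufficient if both. *)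

theory Defs
  imports "HOL-Analysis.Analysis"
begin

text \<open>Columns of A = [I, -M] are indexed by 'n + 'n: Inl i is the i-th column of I,
  Inr i is the i-th column of -M (corresponds to index i+n in the paper).\<close>

definition lcp_col :: "real^'n^'n \<Rightarrow> ('n + 'n) \<Rightarrow> real^'n" where
  "lcp_col M j = (case j of Inl i \<Rightarrow> axis i 1 | Inr i \<Rightarrow> - column i M)"

definition compl_idx :: "('n + 'n) \<Rightarrow> ('n + 'n)" where
  "compl_idx j = (case j of Inl i \<Rightarrow> Inr i | Inr i \<Rightarrow> Inl i)"

definition complementary :: "('n + 'n) set \<Rightarrow> bool" where
  "complementary J \<longleftrightarrow> (\<forall>j\<in>J. compl_idx j \<notin> J)"

text \<open>A_{.B} invertible: |B| = n and the square matrix whose columns are the columns of A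
  indexed by B (in some ordering) is invertible.\<close>
definition is_basis :: "real^'n^'n \<Rightarrow> ('n + 'n) set \<Rightarrow> bool" where
  "is_basis M B \<longleftrightarrow> (\<exists>f. bij_betw f (UNIV :: 'n set) B \<and>
      invertible ((\<chi> r k. lcp_col M (f k) $ r) :: real^'n^'n))"

definition compl_basis :: "real^'n^'n \<Rightarrow> ('n + 'n) set \<Rightarrow> bool" where
  "compl_basis M B \<longleftrightarrow> complementary B \<and> is_basis M B"

definition compl_cone :: "real^'n^'n \<Rightarrow> ('n + 'n) set \<Rightarrow> (real^'n) set" where
  "compl_cone M J = {(\<Sum>j\<in>J. l j *\<^sub>R lcp_col M j) | l. \<forall>j\<in>J. l j \<ge> 0}"

definition column_sufficient :: "real^'n^'n \<Rightarrow> bool" where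
  "column_sufficient M \<longleftrightarrow> (\<forall>z::real^'n.
     (\<forall>i. z $ i * (M *v z) $ i \<le> 0) \<longrightarrow> (\<forall>i. z $ i * (M *v z) $ i = 0))"

definition row_sufficient :: "real^'n^'n \<Rightarrow> bool" where
  "row_sufficient M \<longleftrightarrow> column_sufficient (transpose M)"

definition sufficient :: "real^'n^'n \<Rightarrow> bool" where
  "sufficient M \<longleftrightarrow> column_sufficient M \<and> row_sufficient M"

end

theory Submission
  imports Defs
begin

definition SS :: "real^'n^'n \<Rightarrow> (('n + 'n) \<Rightarrow> real) \<Rightarrow> real^'n" where
  "SS M l = (\<Sum>j\<in>UNIV. l j *\<^sub>R lcp_col M j)"

lemma sum_restr: "(\<Sum>j\<in>J. l j *\<^sub>R (c j::real^'n)) = (\<Sum>j\<in>(UNIV::('n+'n) set). (if j \<in> J then l j else 0) *\<^sub>R c j)"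
proof -
  have "(\<Sum>j\<in>(UNIV::('n+'n) set). (if j \<in> J then l j else 0) *\<^sub>R c j) = (\<Sum>j\<in>(UNIV::('n+'n) set). (if j \<in> J then l j *\<^sub>R c j else 0))"
    by (rule sum.cong) auto
  also have "\<dots> = (\<Sum>j\<in>J. l j *\<^sub>R c j)" by (simp add: sum.If_cases)
  finally show ?thesis by simp
qed

lemma cone_alt: "compl_cone M J = {SS M l | l. (\<forall>j. l j \<ge> 0) \<and> (\<forall>j. j \<notin> J \<longrightarrow> l j = 0)}"
proof (intro set_eqI iffI)
  fix x assume "x \<in> compl_cone M J"
  then obtain l where l: "\<forall>j\<in>J. l j \<ge> 0" "x = (\<Sum>j\<in>J. l j *\<^sub>R lcp_col M j)"
    unfolding compl_cone_def by blast
  show "x \<in> {SS M l | l. (\<forall>j. l j \<ge> 0) \<and> (\<forall>j. j \<notin> J \<longrightarrow> l j = 0)}"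
    by (rule CollectI, rule exI[of _ "\<lambda>j. if j \<in> J then l j else 0"]) (use l in \<open>auto simp: SS_def sum_restr[where J=J]\<close>)
next
  fix x assume "x \<in> {SS M l | l. (\<forall>j. l j \<ge> 0) \<and> (\<forall>j. j \<notin> J \<longrightarrow> l j = 0)}"
  then obtain l where l: "\<forall>j. l j \<ge> 0" "\<forall>j. j \<notin> J \<longrightarrow> l j = 0" "x = SS M l" by blast
  have "x = (\<Sum>j\<in>J. l j *\<^sub>R lcp_col M j)"
    unfolding l(3) SS_def sum_restr[where J=J] by (rule sum.cong) (use l in auto)
  then show "x \<in> compl_cone M J" unfolding compl_cone_def using l by blast
qed

lemma SS_lin: "SS M (\<lambda>j. u * a j + v * b j) = u *\<^sub>R SS M a + v *\<^sub>R SS M b"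
  by (simp add: SS_def scaleR_add_left sum.distrib scaleR_sum_right)

lemma SS_diff: "SS M (\<lambda>j. a j - b j) = SS M a - SS M b"
  by (simp add: SS_def scaleR_diff_left sum_subtractf)

lemma indep:
  fixes M :: "real^'n^'n"
  assumes "is_basis M B" "\<forall>j. j \<notin> B \<longrightarrow> l j = 0" "SS M l = 0"
  shows "l j = 0"
proof -
  obtain f where f: "bij_betw f (UNIV::'n set) B"
    and inv: "invertible ((\<chi> r k. lcp_col M (f k) $ r) :: real^'n^'n)"
    using assms(1) unfolding is_basis_def by blast
  define A where "A = ((\<chi> r k. lcp_col M (f k) $ r) :: real^'n^'n)"
  define x where "x = (\<chi> k. l (f k))"
  have "SS M l = (\<Sum>j\<in>B. l j *\<^sub>R lcp_col M j)"
    unfolding SS_def sum_restr[where J=B] by (rule sum.cong) (use assms(2) in auto)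
  also have "\<dots> = (\<Sum>k\<in>UNIV. l (f k) *\<^sub>R lcp_col M (f k))"
    using sum.reindex_bij_betw[OF f, of "\<lambda>j. l j *\<^sub>R lcp_col M j"] by simp
  also have "\<dots> = A *v x"
    by (simp add: A_def x_def vec_eq_iff matrix_vector_mult_def sum_component mult.commute)
  finally have "A *v x = 0" using assms(3) by simp
  moreover obtain A' where "A' ** A = mat 1" using inv unfolding invertible_def A_def by blast
  ultimately have "x = 0" by (metis matrix_vector_mul_assoc matrix_vector_mul_lid matrix_vector_mult_0_right)
  show ?thesis
  proof (cases "j \<in> B")
    case True
    then obtain k where "j = f k" using f unfolding bij_betw_def by auto
    then show ?thesis using \<open>x = 0\<close> unfolding x_def by (simp add: vec_eq_iff)
  qed (use assms(2) in auto)
qed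

lemma uniq:
  fixes M :: "real^'n^'n"
  assumes "is_basis M B" "\<forall>j. j \<notin> B \<longrightarrow> a j = 0" "\<forall>j. j \<notin> B \<longrightarrow> b j = 0" "SS M a = SS M b"
  shows "a j = b j"
  using indep[OF assms(1), of "\<lambda>j. a j - b j" j] assms(2-4) by (simp add: SS_diff)

lemma convex_cone: fixes M :: "real^'n^'n" shows "convex (compl_cone M J)"
  unfolding convex_def cone_alt
proof (clarify)
  fix a b :: "('n+'n) \<Rightarrow> real" and u v :: real
  assume a: "\<forall>j. 0 \<le> a j" "\<forall>j. j \<notin> J \<longrightarrow> a j = 0" and b: "\<forall>j. 0 \<le> b j" "\<forall>j. j \<notin> J \<longrightarrow> b j = 0"
    and uv: "0 \<le> u" "0 \<le> v" "u + v = 1"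
  show "\<exists>l. u *\<^sub>R SS M a + v *\<^sub>R SS M b = SS M l \<and> (\<forall>j. 0 \<le> l j) \<and> (\<forall>j. j \<notin> J \<longrightarrow> l j = 0)"
    by (rule exI[of _ "\<lambda>j. u * a j + v * b j"]) (use a b uv in \<open>auto simp: SS_lin\<close>)
qed

lemma face_lemma:
  fixes M :: "real^'n^'n"
  assumes "is_basis M B" "i \<in> B"
  shows "compl_cone M (B - {i}) face_of compl_cone M B"
  unfolding face_of_def
proof (intro conjI ballI impI)
  show "compl_cone M (B - {i}) \<subseteq> compl_cone M B" unfolding cone_alt by blast
  show "convex (compl_cone M (B - {i}))" by (rule convex_cone)
next
  fix a b x assume "a \<in> compl_cone M B" "b \<in> compl_cone M B" "x \<in> compl_cone M (B - {i})"
    and seg: "x \<in> open_segment a b"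
  then obtain la lb lx where la: "\<forall>j. 0 \<le> la j" "\<forall>j. j \<notin> B \<longrightarrow> la j = 0" "a = SS M la"
    and lb: "\<forall>j. 0 \<le> lb j" "\<forall>j. j \<notin> B \<longrightarrow> lb j = 0" "b = SS M lb"
    and lx: "\<forall>j. 0 \<le> lx j" "\<forall>j. j \<notin> B - {i} \<longrightarrow> lx j = 0" "x = SS M lx"
    unfolding cone_alt by blast
  obtain u where u: "0 < u" "u < 1" "x = (1 - u) *\<^sub>R a + u *\<^sub>R b" using seg by (auto simp: in_segment)
  have "SS M (\<lambda>j. (1 - u) * la j + u * lb j) = SS M lx" using u la lb lx by (simp add: SS_lin)
  from uniq[OF assms(1) _ _ this, of i] la lb lx
  have "(1 - u) * la i + u * lb i = 0" by auto
  moreover have "(1 - u) * la i \<ge> 0" "u * lb i \<ge> 0" using u la lb by auto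
  ultimately have "(1 - u) * la i = 0" "u * lb i = 0" by (auto simp: add_nonneg_eq_0_iff)
  then have "la i = 0" "lb i = 0" using u by auto
  then show "a \<in> compl_cone M (B - {i})" "b \<in> compl_cone M (B - {i})"
    unfolding cone_alt using la lb by auto
qed

lemma SS_wz: fixes M :: "real^'n^'n" shows "SS M l = (\<chi> k. l (Inl k)) - M *v (\<chi> k. l (Inr k))"
proof -
  have "SS M l = (\<Sum>j\<in>(UNIV::'n set) <+> (UNIV::'n set). l j *\<^sub>R lcp_col M j)"
    unfolding SS_def UNIV_Plus_UNIV ..
  also have "\<dots> = (\<Sum>k\<in>UNIV. l (Inl k) *\<^sub>R axis k 1) - (\<Sum>k\<in>UNIV. l (Inr k) *\<^sub>R column k M)"
    by (simp only: sum.Plus[OF finite finite]) (simp add: lcp_col_def sum_negf)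
  also have "\<dots> = (\<chi> k. l (Inl k)) - M *v (\<chi> k. l (Inr k))"
    by (simp add: vec_eq_iff sum_component axis_def column_def matrix_vector_mult_def mult.commute if_distrib[of "\<lambda>x. _ * x"] sum.delta cong: if_cong)
  finally show ?thesis .
qed

lemma compl_compl[simp]: "compl_idx (compl_idx j) = j"
  by (cases j) (auto simp: compl_idx_def)

lemma compl_neq[simp]: "compl_idx j \<noteq> j"
  by (cases j) (auto simp: compl_idx_def)

lemma compl_Inl[simp]: "compl_idx (Inl k) = Inr k" and compl_Inr[simp]: "compl_idx (Inr k) = Inl k"
  by (auto simp: compl_idx_def)

lemma cross:
  fixes M :: "real^'n^'n"
  assumes cs: "column_sufficient M" and c1: "complementary J1" and c2: "complementary J2"
    and p1: "\<forall>j. l1 j \<ge> 0" and z1: "\<forall>j. j \<notin> J1 \<longrightarrow> l1 j = 0"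
    and p2: "\<forall>j. l2 j \<ge> 0" and z2: "\<forall>j. j \<notin> J2 \<longrightarrow> l2 j = 0"
    and eq: "SS M l1 = SS M l2"
  shows "l1 j * l2 (compl_idx j) = 0"
proof -
  define w1 where "w1 = (\<chi> k. l1 (Inl k))"
  define v1 where "v1 = (\<chi> k. l1 (Inr k))"
  define w2 where "w2 = (\<chi> k. l2 (Inl k))"
  define v2 where "v2 = (\<chi> k. l2 (Inr k))"
  have e: "w1 - M *v v1 = w2 - M *v v2" using eq unfolding SS_wz w1_def v1_def w2_def v2_def .
  have comp1: "w1 $ k * v1 $ k = 0" for k
    using c1 z1 unfolding complementary_def w1_def v1_def
    by (metis compl_Inl mult_eq_0_iff vec_lambda_beta)
  have comp2: "w2 $ k * v2 $ k = 0" for k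
    using c2 z2 unfolding complementary_def w2_def v2_def
    by (metis compl_Inl mult_eq_0_iff vec_lambda_beta)
  define d where "d = v1 - v2"
  have Md: "M *v d = w1 - w2" using e unfolding d_def by (simp add: matrix_vector_mult_diff_distrib algebra_simps)
  have key: "d $ k * (M *v d) $ k = - (v1 $ k * w2 $ k + v2 $ k * w1 $ k)" for k
  proof -
    have "d $ k * (w1 - w2) $ k = - (v1 $ k * w2 $ k + v2 $ k * w1 $ k)"
      using comp1[of k] comp2[of k] unfolding d_def by (simp add: algebra_simps) (auto simp: mult.commute)
    then show ?thesis using Md by simp
  qed
  have nn: "v1 $ k * w2 $ k \<ge> 0" "v2 $ k * w1 $ k \<ge> 0" for k
    using p1 p2 unfolding v1_def w2_def v2_def w1_def by auto
  have "\<forall>k. d $ k * (M *v d) $ k \<le> 0" proof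
    fix k show "d $ k * (M *v d) $ k \<le> 0" using key[of k] nn[of k] by linarith
  qed
  then have "\<forall>k. d $ k * (M *v d) $ k = 0" using cs unfolding column_sufficient_def by blast
  then have "v1 $ k * w2 $ k = 0 \<and> v2 $ k * w1 $ k = 0" for k
  proof -
    have "d $ k * (M *v d) $ k = 0" using \<open>\<forall>k. d $ k * (M *v d) $ k = 0\<close> by blast
    then show ?thesis using key[of k] nn[of k] by linarith
  qed
  then show ?thesis
    unfolding v1_def w2_def v2_def w1_def by (cases j) (auto simp: mult.commute)
qed

lemma compl_sub: "complementary B \<Longrightarrow> J \<subseteq> B \<Longrightarrow> complementary J"
  unfolding complementary_def by blast

lemma basis_card:
  fixes M :: "real^'n^'n"
  assumes "is_basis M B" shows "card B = CARD('n)"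
  using assms unfolding is_basis_def by (metis bij_betw_same_card)

lemma one_per_pair:
  fixes M :: "real^'n^'n"
  assumes "compl_basis M B" shows "j \<in> B \<or> compl_idx j \<in> B"
proof -
  define p :: "'n + 'n \<Rightarrow> 'n" where "p = case_sum id id"
  have c: "complementary B" and cb: "card B = CARD('n)"
    using assms basis_card unfolding compl_basis_def by auto
  have inj: "inj_on p B"
  proof (rule inj_onI)
    fix a b assume ab: "a \<in> B" "b \<in> B" "p a = p b"
    show "a = b"
    proof (rule ccontr)
      assume "a \<noteq> b"
      with ab(3) have "b = compl_idx a" unfolding p_def by (cases a; cases b) auto
      then show False using c ab unfolding complementary_def by blast
    qed
  qed
  have "card (p ` B) = CARD('n)" using card_image[OF inj] cb by simp
  then have "p ` B = UNIV" by (simp add: card_eq_UNIV_imp_eq_UNIV)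
  then obtain b where b: "b \<in> B" "p b = p j" by (metis UNIV_I imageE)
  then have "b = j \<or> b = compl_idx j" unfolding p_def by (cases b; cases j) auto
  then show ?thesis using b by auto
qed

lemma relint_pos:
  fixes M :: "real^'n^'n"
  assumes b: "is_basis M B" and J: "J \<subseteq> B" and q: "q \<in> rel_interior (compl_cone M J)"
  obtains l where "q = SS M l" "\<forall>j. j \<notin> J \<longrightarrow> l j = 0" "\<forall>j\<in>J. l j > 0"
proof -
  from q obtain e where e: "e > 0" "ball q e \<inter> affine hull (compl_cone M J) \<subseteq> compl_cone M J"
    and qC: "q \<in> compl_cone M J"
    unfolding mem_rel_interior_ball by blast
  from qC obtain l where l: "\<forall>j. 0 \<le> l j" "\<forall>j. j \<notin> J \<longrightarrow> l j = 0" "q = SS M l"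
    unfolding cone_alt by blast
  define ind where "ind = (\<lambda>j. if j \<in> J then 1 else (0::real))"
  define c where "c = SS M ind"
  define t where "t = e / (2 * (norm c + 1))"
  have t: "t > 0" unfolding t_def using e by (intro divide_pos_pos) (auto intro: add_nonneg_pos)
  have "t * norm c < e"
  proof -
    have "t * norm c \<le> t * (norm c + 1)" using t by simp
    also have "\<dots> = e / 2" unfolding t_def
    proof -
      have "norm c + 1 > 0" by (simp add: add_nonneg_pos)
      then show "e / (2 * (norm c + 1)) * (norm c + 1) = e / 2"
        by (metis (no_types) divide_divide_eq_left less_numeral_extra(3) nonzero_eq_divide_eq times_divide_eq_left)
    qed
    finally show ?thesis using e by simp
  qed
  define y where "y = q + t *\<^sub>R (0 - c)"
  have cC: "c \<in> compl_cone M J" unfolding cone_alt c_def ind_def by auto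
  have zC: "0 \<in> compl_cone M J" unfolding cone_alt by (rule CollectI, rule exI[of _ "\<lambda>j. 0"]) (simp add: SS_def)
  have "y \<in> affine hull (compl_cone M J)" unfolding y_def
    by (rule mem_affine_3_minus) (use qC cC zC in \<open>auto intro: hull_inc\<close>)
  moreover have "y \<in> ball q e" using \<open>t * norm c < e\<close> t unfolding y_def by (simp add: dist_norm)
  ultimately have "y \<in> compl_cone M J" using e by blast
  then obtain m where m: "\<forall>j. 0 \<le> m j" "\<forall>j. j \<notin> J \<longrightarrow> m j = 0" "y = SS M m"
    unfolding cone_alt by blast
  have "SS M (\<lambda>j. 1 * l j + (- t) * ind j) = SS M m"
    unfolding SS_lin using m l unfolding y_def c_def by simp
  then have "1 * l j + (- t) * ind j = m j" for j
    by (rule uniq[OF b, rotated 2]) (use l m J ind_def in auto)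
  then have "\<forall>j\<in>J. l j > 0"
  proof (intro ballI)
    fix j assume "j \<in> J"
    have "1 * l j + (- t) * ind j = m j" by fact
    then have "l j - t = m j" using \<open>j \<in> J\<close> unfolding ind_def by simp
    moreover have "m j \<ge> 0" using m(1) by blast
    ultimately show "l j > 0" using t by linarith
  qed
  then show ?thesis using that l by blast
qed

lemma aff_dim_cone:
  fixes M :: "real^'n^'n"
  assumes b: "is_basis M B" and J: "J \<subseteq> B"
  shows "aff_dim (compl_cone M J) = int (card J)"
proof -
  let ?c = "lcp_col M"
  have zC: "0 \<in> compl_cone M J" unfolding cone_alt by (rule CollectI, rule exI[of _ "\<lambda>j. 0"]) (simp add: SS_def)
  have "aff_dim (compl_cone M J) = int (dim ((+) (- 0) ` compl_cone M J))"
    by (rule aff_dim_eq_dim) (use zC in \<open>auto intro: hull_inc\<close>)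
  then have ad: "aff_dim (compl_cone M J) = int (dim (compl_cone M J))" by simp
  have sub1: "?c ` J \<subseteq> compl_cone M J"
  proof
    fix x assume "x \<in> ?c ` J"
    then obtain j where j: "j \<in> J" "x = ?c j" by blast
    have "SS M (\<lambda>k. if k = j then 1 else 0) = x" unfolding SS_def j(2) by (simp add: if_distrib[of "\<lambda>a. a *\<^sub>R _"] cong: if_cong)
    then show "x \<in> compl_cone M J" unfolding cone_alt using j by (auto intro!: exI[of _ "\<lambda>k. if k = j then 1 else 0"])
  qed
  have sub2: "compl_cone M J \<subseteq> span (?c ` J)"
  proof
    fix x assume "x \<in> compl_cone M J"
    then have "x \<in> {(\<Sum>j\<in>J. l j *\<^sub>R ?c j) | l. \<forall>j\<in>J. l j \<ge> 0}" unfolding compl_cone_def .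
    then obtain l where "x = (\<Sum>j\<in>J. l j *\<^sub>R ?c j)" by blast
    then show "x \<in> span (?c ` J)" by (simp add: span_sum span_scale span_base)
  qed
  have inj: "inj_on ?c J"
  proof (rule inj_onI, rule ccontr)
    fix a b assume ab: "a \<in> J" "b \<in> J" "?c a = ?c b" "a \<noteq> b"
    have "SS M (\<lambda>k. if k = a then 1 else if k = b then -1 else 0) = ?c a - ?c b"
      unfolding SS_def using ab(4)
      by (simp add: if_distrib[of "\<lambda>a. a *\<^sub>R _"] sum.If_cases cong: if_cong)
    then have "SS M (\<lambda>k. if k = a then 1 else if k = b then -1 else 0) = 0" using ab by simp
    have "\<forall>j. j \<notin> B \<longrightarrow> (\<lambda>k. if k = a then 1 else if k = b then -1 else (0::real)) j = 0"
      using ab J by auto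
    from indep[OF b this \<open>SS M _ = 0\<close>, of a] show False by simp
  qed
  have ind: "independent (?c ` J)"
  proof
    assume "dependent (?c ` J)"
    then obtain u where u: "\<exists>v\<in>?c ` J. u v \<noteq> 0" "(\<Sum>v\<in>?c ` J. u v *\<^sub>R v) = 0"
      using dependent_finite[of "?c ` J"] by auto
    have "(\<Sum>j\<in>J. u (?c j) *\<^sub>R ?c j) = 0" using u(2) sum.reindex[OF inj, of "\<lambda>v. u v *\<^sub>R v"] by simp
    then have "SS M (\<lambda>j. if j \<in> J then u (?c j) else 0) = 0" unfolding SS_def sum_restr[where J=J] .
    from indep[OF b _ this] J have "\<forall>j\<in>J. u (?c j) = 0" by (metis subsetD)
    then show False using u(1) by auto
  qed
  have "dim (compl_cone M J) = dim (?c ` J)"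
    using dim_subset[OF sub1] dim_subset[OF sub2] by simp
  also have "\<dots> = card J" using dim_eq_card_independent[OF ind] card_image[OF inj] by simp
  finally show ?thesis using ad by simp
qed

theorem mainTheorem2:
  fixes M :: "real^'n^'n" and B :: "('n + 'n) set" and i :: "'n + 'n"
  assumes "sufficient M"
    and "compl_basis M B"
    and "i \<in> B"
    and "is_basis M ((B - {i}) \<union> {compl_idx i})"
  shows "compl_cone M (B - {i}) face_of compl_cone M B
       \<and> aff_dim (compl_cone M (B - {i})) = int CARD('n) - 1
       \<and> compl_cone M (B - {i}) face_of compl_cone M ((B - {i}) \<union> {compl_idx i})
       \<and> compl_cone M B \<inter> compl_cone M ((B - {i}) \<union> {compl_idx i}) = compl_cone M (B - {i})
       \<and> (\<forall>B''. compl_basis M B'' \<and> B'' \<noteq> B \<and> B'' \<noteq> (B - {i}) \<union> {compl_idx i} \<longrightarrow>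
            compl_cone M B'' \<inter> rel_interior (compl_cone M (B - {i})) = {})"
proof -
  define B' where "B' = (B - {i}) \<union> {compl_idx i}"
  have cs: "column_sufficient M" using assms(1) unfolding sufficient_def by blast
  have cB: "complementary B" and bB: "is_basis M B" using assms(2) unfolding compl_basis_def by auto
  have bB': "is_basis M B'" using assms(4) unfolding B'_def .
  have ni: "compl_idx i \<notin> B" using cB assms(3) unfolding complementary_def by blast
  have B'm: "B' - {compl_idx i} = B - {i}" unfolding B'_def using ni by auto
  have ci: "compl_idx i \<in> B'" unfolding B'_def by simp
  have cB': "complementary B'" unfolding complementary_def B'_def
  proof
    fix j assume j: "j \<in> B - {i} \<union> {compl_idx i}"
    show "compl_idx j \<notin> B - {i} \<union> {compl_idx i}"
    proof
      assume cj: "compl_idx j \<in> B - {i} \<union> {compl_idx i}"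
      show False
      proof (cases "j = compl_idx i")
        case True then show ?thesis using cj compl_neq[of i] by auto
      next
        case False
        then have "j \<in> B" "j \<noteq> i" using j by auto
        moreover have "compl_idx j \<noteq> compl_idx i" using \<open>j \<noteq> i\<close> by (metis compl_compl)
        ultimately show ?thesis using cj cB unfolding complementary_def by auto
      qed
    qed
  qed
  have f1: "compl_cone M (B - {i}) face_of compl_cone M B" by (rule face_lemma[OF bB assms(3)])
  have f2: "compl_cone M (B - {i}) face_of compl_cone M B'"
    using face_lemma[OF bB' ci] unfolding B'm .
  have ad: "aff_dim (compl_cone M (B - {i})) = int CARD('n) - 1"
  proof -
    have "aff_dim (compl_cone M (B - {i})) = int (card (B - {i}))" by (rule aff_dim_cone[OF bB]) auto
    also have "card (B - {i}) = CARD('n) - 1" using basis_card[OF bB] assms(3) by simp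
    also have "int (CARD('n) - 1) = int CARD('n) - 1" using zero_less_card_finite[where 'a='n] by linarith
    finally show ?thesis .
  qed
  have int: "compl_cone M B \<inter> compl_cone M B' = compl_cone M (B - {i})"
  proof
    show "compl_cone M (B - {i}) \<subseteq> compl_cone M B \<inter> compl_cone M B'"
      using face_of_imp_subset[OF f1] face_of_imp_subset[OF f2] by blast
  next
    show "compl_cone M B \<inter> compl_cone M B' \<subseteq> compl_cone M (B - {i})"
    proof
      fix q assume "q \<in> compl_cone M B \<inter> compl_cone M B'"
      then obtain la lb where la: "\<forall>j. 0 \<le> la j" "\<forall>j. j \<notin> B \<longrightarrow> la j = 0" "q = SS M la"
        and lb: "\<forall>j. 0 \<le> lb j" "\<forall>j. j \<notin> B' \<longrightarrow> lb j = 0" "q = SS M lb"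
        unfolding cone_alt by blast
      have "la i * lb (compl_idx i) = 0"
        by (rule cross[OF cs cB cB' la(1,2) lb(1,2)]) (use la lb in simp)
      then consider "la i = 0" | "lb (compl_idx i) = 0" by auto
      then show "q \<in> compl_cone M (B - {i})"
      proof cases
        case 1 then show ?thesis unfolding cone_alt using la by (auto intro!: exI[of _ la])
      next
        case 2
        have "\<forall>j. j \<notin> B - {i} \<longrightarrow> lb j = 0" using 2 lb(2) B'm by auto
        then show ?thesis unfolding cone_alt using lb by (auto intro!: exI[of _ lb])
      qed
    qed
  qed
  have last: "compl_cone M B'' \<inter> rel_interior (compl_cone M (B - {i})) = {}"
    if B'': "compl_basis M B''" "B'' \<noteq> B" "B'' \<noteq> B'" for B''
  proof (rule ccontr)
    assume "compl_cone M B'' \<inter> rel_interior (compl_cone M (B - {i})) \<noteq> {}"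
    then obtain q where q2: "q \<in> compl_cone M B''" and q1: "q \<in> rel_interior (compl_cone M (B - {i}))" by blast
    have cB'': "complementary B''" and bB'': "is_basis M B''" using B'' unfolding compl_basis_def by auto
    obtain l1 where l1: "q = SS M l1" "\<forall>j. j \<notin> B - {i} \<longrightarrow> l1 j = 0" "\<forall>j\<in>B - {i}. l1 j > 0"
      using relint_pos[OF bB _ q1] by blast
    obtain l2 where l2: "\<forall>j. 0 \<le> l2 j" "\<forall>j. j \<notin> B'' \<longrightarrow> l2 j = 0" "q = SS M l2"
      using q2 unfolding cone_alt by blast
    have l1p: "\<forall>j. 0 \<le> l1 j" using l1 by (metis less_imp_le order_refl)
    have cBi: "complementary (B - {i})" using compl_sub[OF cB] by blast
    have cr: "l1 (compl_idx j) * l2 j = 0" for j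
      using cross[OF cs cBi cB'' l1p l1(2) l2(1,2), of "compl_idx j"] l1 l2 by simp
    have supp: "l2 j \<noteq> 0 \<Longrightarrow> j \<in> B \<or> j = compl_idx i" for j
    proof -
      assume nz: "l2 j \<noteq> 0"
      have "compl_idx j \<notin> B - {i}"
      proof
        assume "compl_idx j \<in> B - {i}"
        then have "l1 (compl_idx j) \<noteq> 0" using l1(3) by force
        then show False using cr[of j] nz by simp
      qed
      then show ?thesis using one_per_pair[OF assms(2), of j] by (metis DiffI compl_compl singletonD)
    qed
    have ni'': "l2 (compl_idx i) = 0"
    proof (rule ccontr)
      assume nz: "l2 (compl_idx i) \<noteq> 0"
      then have "compl_idx i \<in> B''" using l2(2) by blast
      then have "i \<notin> B''" using cB'' unfolding complementary_def by (metis compl_compl)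
      then have "\<forall>j. j \<notin> B' \<longrightarrow> l2 j = 0" using supp l2(2) unfolding B'_def by blast
      moreover have "\<forall>j. j \<notin> B' \<longrightarrow> l1 j = 0" using l1(2) unfolding B'_def by blast
      ultimately have "l2 (compl_idx i) = l1 (compl_idx i)" using uniq[OF bB'] l1(1) l2(3) by metis
      then show False using nz l1(2) ni by auto
    qed
    have "\<forall>j. j \<notin> B \<longrightarrow> l2 j = 0" using supp ni'' by blast
    moreover have "\<forall>j. j \<notin> B \<longrightarrow> l1 j = 0" using l1(2) by blast
    ultimately have eq: "l2 j = l1 j" for j using uniq[OF bB] l1(1) l2(3) by metis
    have sub: "B - {i} \<subseteq> B''"
    proof
      fix j assume "j \<in> B - {i}"
      then have "l1 j > 0" using l1(3) by blast
      then have "l2 j \<noteq> 0" using eq[of j] by simp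
      then show "j \<in> B''" using l2(2) by blast
    qed
    have sub2: "B'' \<subseteq> (B - {i}) \<union> {i, compl_idx i}"
    proof
      fix x assume x: "x \<in> B''"
      show "x \<in> (B - {i}) \<union> {i, compl_idx i}"
      proof (cases "x \<in> B")
        case True then show ?thesis by auto
      next
        case False
        then have "compl_idx x \<in> B" using one_per_pair[OF assms(2), of x] by blast
        moreover have "compl_idx x \<notin> B''" using x cB'' unfolding complementary_def by blast
        ultimately have "compl_idx x = i" using sub by blast
        then show ?thesis by (metis compl_compl insertCI UnI2)
      qed
    qed
    have nboth: "\<not> (i \<in> B'' \<and> compl_idx i \<in> B'')" using cB'' unfolding complementary_def by blast
    show False
    proof (cases "i \<in> B''")
      case True
      then have "B'' = B" using sub sub2 nboth assms(3) by blast
      then show False using B'' by blast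
    next
      case False
      show False
      proof (cases "compl_idx i \<in> B''")
        case True
        then have "B'' = B'" using sub sub2 False unfolding B'_def by blast
        then show False using B'' by blast
      next
        case False2: False
        then have "B'' = B - {i}" using sub sub2 False by blast
        then have "card B'' = CARD('n) - 1" using basis_card[OF bB] assms(3) by simp
        moreover have "card B'' = CARD('n)" by (rule basis_card[OF bB''])
        ultimately show False using zero_less_card_finite[where 'a='n] by linarith
      qed
    qed
  qed
  show ?thesis using f1 f2 ad int last unfolding B'_def by blast
qed

end
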